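(* Let $\Gamma\in\mathcal S$ have $n$ vertices and let $\varphi$ be an embedding as in the definition of $\mathcal S$. Then for every vertex $v$, either $\varphi(v)=E_{i_v}-\sum_{j\in J_v}E_j$ or $\varphi(v)=-2E_{i_v}-\sum_{j\in J_v}E_j$, for some index $i_v$ and some subset $J_v\subset\{1,\dots,n\}$ with $i_v\notin J_v$.
   Context: A plumbing tree is a finite tree $\Gamma$ each of whose vertices $v$ carries an integer decoration $d(v)$. $\Gamma$ is minimal if no vertex has decoration $-1$. For $n\ge 1$ let $(\mathbb Z^n,Q_n)$ be the lattice with basis $E_1,\dots,E_n$ and $Q_n(E_i,E_j)=-\delta_{ij}$, and let $K=\sum_{i=1}^n E_i$. A plumbing tree $\Gamma$ on $n$ vertices is a symplectic plumbing tree if there is a map $\varphi$ (an embedding) from its vertex set to $\mathbb Z^n$ such that: for distinct vertices $v_1,v_2$, $Q_n(\varphi(v_1),\varphi(v_2))$ is $1$ if they are adjacent and $0$ otherwise; $Q_n(\varphi(v),\varphi(v))=d(v)$ for every $v$; and $Q_n(\varphi(v),K)+Q_n(\varphi(v),\varphi(v))=-2$ for every $v$. $\mathcal S$ is the set of minimal, connected symplectic plumbing trees. *)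

theory Defs
  imports Main
begin

definition simple_graph :: "'a set \<Rightarrow> ('a \<Rightarrow> 'a \<Rightarrow> bool) \<Rightarrow> bool" where
  "simple_graph V E \<longleftrightarrow> finite V \<and> (\<forall>x y. E x y \<longrightarrow> x \<in> V \<and> y \<in> V)
     \<and> (\<forall>x y. E x y \<longrightarrow> E y x) \<and> (\<forall>x. \<not> E x x)"

definition graph_connected :: "'a set \<Rightarrow> ('a \<Rightarrow> 'a \<Rightarrow> bool) \<Rightarrow> bool" where
  "graph_connected V E \<longleftrightarrow> (\<forall>x\<in>V. \<forall>y\<in>V. E\<^sup>*\<^sup>* x y)"

definition is_cycle :: "('a \<Rightarrow> 'a \<Rightarrow> bool) \<Rightarrow> 'a list \<Rightarrow> bool" where
  "is_cycle E cs \<longleftrightarrow> length cs \<ge> 3 \<and> distinct cs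
     \<and> (\<forall>i. Suc i < length cs \<longrightarrow> E (cs ! i) (cs ! Suc i)) \<and> E (last cs) (hd cs)"

definition is_tree :: "'a set \<Rightarrow> ('a \<Rightarrow> 'a \<Rightarrow> bool) \<Rightarrow> bool" where
  "is_tree V E \<longleftrightarrow> simple_graph V E \<and> V \<noteq> {} \<and> graph_connected V E
     \<and> (\<nexists>cs. is_cycle E cs)"

(* Vectors of Z^n are functions nat \<Rightarrow> int supported on {1..n}. *)
definition in_Zn :: "nat \<Rightarrow> (nat \<Rightarrow> int) \<Rightarrow> bool" where
  "in_Zn n x \<longleftrightarrow> (\<forall>j. j \<notin> {1..n} \<longrightarrow> x j = 0)"

definition Qn :: "nat \<Rightarrow> (nat \<Rightarrow> int) \<Rightarrow> (nat \<Rightarrow> int) \<Rightarrow> int" where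
  "Qn n x y = - (\<Sum>i=1..n. x i * y i)"

definition Ebasis :: "nat \<Rightarrow> nat \<Rightarrow> int" where
  "Ebasis i = (\<lambda>j. if j = i then 1 else 0)"

definition Kvec :: "nat \<Rightarrow> nat \<Rightarrow> int" where
  "Kvec n = (\<lambda>j. if j \<in> {1..n} then 1 else 0)"

definition symplectic_embedding ::
  "nat \<Rightarrow> 'a set \<Rightarrow> ('a \<Rightarrow> 'a \<Rightarrow> bool) \<Rightarrow> ('a \<Rightarrow> int) \<Rightarrow> ('a \<Rightarrow> nat \<Rightarrow> int) \<Rightarrow> bool" where
  "symplectic_embedding n V E d \<phi> \<longleftrightarrow>
     (\<forall>v\<in>V. in_Zn n (\<phi> v))
   \<and> (\<forall>v1\<in>V. \<forall>v2\<in>V. v1 \<noteq> v2 \<longrightarrow> Qn n (\<phi> v1) (\<phi> v2) = (if E v1 v2 then 1 else 0))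
   \<and> (\<forall>v\<in>V. Qn n (\<phi> v) (\<phi> v) = d v)
   \<and> (\<forall>v\<in>V. Qn n (\<phi> v) (Kvec n) + Qn n (\<phi> v) (\<phi> v) = -2)"

definition minimal_plumbing :: "'a set \<Rightarrow> ('a \<Rightarrow> int) \<Rightarrow> bool" where
  "minimal_plumbing V d \<longleftrightarrow> (\<forall>v\<in>V. d v \<noteq> -1)"

definition in_S :: "'a set \<Rightarrow> ('a \<Rightarrow> 'a \<Rightarrow> bool) \<Rightarrow> ('a \<Rightarrow> int) \<Rightarrow> bool" where
  "in_S V E d \<longleftrightarrow> is_tree V E \<and> minimal_plumbing V d
     \<and> (\<exists>\<phi>. symplectic_embedding (card V) V E d \<phi>)"

end

theory Submission
  imports Defs
begin

lemma xx_nonneg: "(x::int) * (x + 1) \<ge> 0"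
proof (cases "x \<ge> 0")
  case True then show ?thesis by simp
next
  case False then have "x + 1 \<le> 0" by simp
  then show ?thesis using False by (simp add: mult_nonpos_nonpos)
qed

lemma xx_ne1: "(x::int) * (x + 1) \<noteq> 1"
proof -
  have "even (x * (x + 1))" by simp
  then show ?thesis by fastforce
qed

lemma xx_eq2: "(x::int) * (x + 1) = 2 \<Longrightarrow> x = 1 \<or> x = -2"
proof -
  assume h: "x * (x + 1) = 2"
  have "(x - 1) * (x + 2) = 0" using h by (simp add: algebra_simps)
  then show ?thesis by auto
qed

lemma sum_two:
  fixes f :: "nat \<Rightarrow> int"
  assumes "finite A" "\<forall>a\<in>A. f a \<ge> 0" "sum f A = 2" "\<forall>a\<in>A. f a \<noteq> 1"
  shows "\<exists>i\<in>A. f i = 2 \<and> (\<forall>j\<in>A - {i}. f j = 0)"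
proof -
  obtain i where i: "i \<in> A" "f i > 0"
  proof (rule ccontr)
    assume "\<not> thesis"
    then have "\<forall>a\<in>A. f a \<le> 0" using that by force
    then have "sum f A \<le> 0" by (simp add: sum_nonpos)
    then show False using assms(3) by simp
  qed
  have fi: "f i \<ge> 2" using i assms(4) by force
  have split: "sum f A = f i + sum f (A - {i})" using assms(1) i(1) by (simp add: sum.remove)
  have rest: "sum f (A - {i}) \<ge> 0" using assms(2) by (intro sum_nonneg) auto
  have r0: "sum f (A - {i}) = 0" using split rest fi assms(3) by simp
  have "\<forall>j\<in>A - {i}. f j = 0"
    using r0 assms(1,2) sum_nonneg_eq_0_iff[of "A - {i}" f] by auto
  moreover have "f i = 2" using split r0 assms(3) by simp
  ultimately show ?thesis using i(1) by blast
qed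

theorem lemma3p1:
  fixes V :: "'a set" and E :: "'a \<Rightarrow> 'a \<Rightarrow> bool" and d :: "'a \<Rightarrow> int"
    and \<phi> :: "'a \<Rightarrow> nat \<Rightarrow> int" and n :: nat
  assumes "in_S V E d"
    and "card V = n"
    and "symplectic_embedding n V E d \<phi>"
  shows "\<forall>v\<in>V. \<exists>i J. i \<in> {1..n} \<and> J \<subseteq> {1..n} \<and> i \<notin> J \<and>
           (\<phi> v = (\<lambda>j. Ebasis i j - (\<Sum>k\<in>J. Ebasis k j))
            \<or> \<phi> v = (\<lambda>j. -2 * Ebasis i j - (\<Sum>k\<in>J. Ebasis k j)))"
proof
  fix v assume v: "v \<in> V"
  define x where "x = \<phi> v"
  have zn: "\<forall>j. j \<notin> {1..n} \<longrightarrow> x j = 0"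
    using assms(3) v unfolding symplectic_embedding_def in_Zn_def x_def by blast
  have c: "Qn n x (Kvec n) + Qn n x x = -2"
    using assms(3) v unfolding symplectic_embedding_def x_def by blast
  have "Qn n x (Kvec n) = - (\<Sum>i=1..n. x i)"
    unfolding Qn_def Kvec_def by (auto intro!: sum.cong)
  then have "(\<Sum>i=1..n. x i) + (\<Sum>i=1..n. x i * x i) = 2" using c unfolding Qn_def by simp
  then have s: "(\<Sum>i=1..n. x i * (x i + 1)) = 2"
    by (simp add: algebra_simps sum.distrib)
  obtain i where i: "i \<in> {1..n}" "x i * (x i + 1) = 2"
    "\<forall>j\<in>{1..n} - {i}. x j * (x j + 1) = 0"
    using sum_two[of "{1..n}" "\<lambda>i. x i * (x i + 1)"] s xx_nonneg xx_ne1 by auto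
  define J where "J = {j\<in>{1..n}. j \<noteq> i \<and> x j = -1}"
  have J: "J \<subseteq> {1..n}" "i \<notin> J" "finite J" unfolding J_def by auto
  have sumJ: "(\<Sum>k\<in>J. Ebasis k j) = (if j \<in> J then 1 else 0)" for j
    using J(3) unfolding Ebasis_def by (simp add: sum.delta)
  have other: "x j = (if j \<in> J then -1 else 0)" if "j \<noteq> i" for j
  proof (cases "j \<in> {1..n}")
    case True
    then have "x j * (x j + 1) = 0" using i(3) that by auto
    then have "x j = 0 \<or> x j = -1" by auto
    then show ?thesis using True that unfolding J_def by auto
  next
    case False then show ?thesis using zn unfolding J_def by auto
  qed
  from xx_eq2[OF i(2)] have "x i = 1 \<or> x i = -2" .
  then have "x = (\<lambda>j. Ebasis i j - (\<Sum>k\<in>J. Ebasis k j))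
            \<or> x = (\<lambda>j. -2 * Ebasis i j - (\<Sum>k\<in>J. Ebasis k j))"
  proof
    assume "x i = 1"
    then have "x = (\<lambda>j. Ebasis i j - (\<Sum>k\<in>J. Ebasis k j))"
      unfolding sumJ using other J(2) by (auto simp: Ebasis_def)
    then show ?thesis by blast
  next
    assume "x i = -2"
    then have "x = (\<lambda>j. -2 * Ebasis i j - (\<Sum>k\<in>J. Ebasis k j))"
      unfolding sumJ using other J(2) by (auto simp: Ebasis_def)
    then show ?thesis by blast
  qed
  then show "\<exists>i J. i \<in> {1..n} \<and> J \<subseteq> {1..n} \<and> i \<notin> J \<and>
           (\<phi> v = (\<lambda>j. Ebasis i j - (\<Sum>k\<in>J. Ebasis k j))
            \<or> \<phi> v = (\<lambda>j. -2 * Ebasis i j - (\<Sum>k\<in>J. Ebasis k j)))"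
    using i(1) J unfolding x_def by blast
qed

end
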